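(* Let $K$ be a commutative unital ring, $k,n\in\mathbb{N}^*$, $\bar a,\bar b=(b_1,\dots,b_k),\bar c=(c_1,\dots,c_k)\in K^k$, $n=mk+r$ with $0\le r<k$, $d_i:=b_ic_i$, $\bar d:=(d_1,\dots,d_k)$. Suppose that for some $q\ge1$ and indices $1\le i_1<i_2<\dots<i_q\le k$ with $n>i_1$ we have $b_{i_1}=\dots=b_{i_q}=0$, or $c_{i_1}=\dots=c_{i_q}=0$. Put $i_{q+1}:=i_1+k$, $i_0:=i_q$. If $r\le i_1$ let $r':=r+k$ and $p:=0$; otherwise let $r':=r$ and let $p\in\mathbb{N}^*$ be such that $i_p<r\le i_{p+1}$. For $1\le j<q$ let $m_j:=1$ if $j<p$ and $m_j:=0$ if $j\ge p$; let $m_q:=0$ if $p>0$ or $m=0$, and $m_q:=-1$ if $p=0$. Then \[\det T^k_n(\bar a,\bar b,\bar c)=\alpha^{\bar a,-\bar d}(i_1,k)\prod_{j=1}^{q}\big(\alpha^{\bar a,-\bar d}_{i_j}(i_{j+1}-i_j,k)\big)^{m+m_j}\,\alpha^{\bar a,-\bar d}_{i_p}(r'-i_p,k).\]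
   Context: Vectors in $K^k$ are extended periodically, $-\bar d$ componentwise. $T^k_n(\bar a,\bar b,\bar c)\in M_n(K)$ is the tridiagonal matrix with diagonal $a_1,\dots,a_n$, superdiagonal $b_1,\dots,b_{n-1}$, subdiagonal $c_1,\dots,c_{n-1}$ (periodic indices), zeros elsewhere. In $P=\mathbb{Z}[x_1,\dots,x_k,y_1,\dots,y_k]$, indices are periodic; shift $f_s:=f(x_{s+1},\dots,x_{s+k},y_{s+1},\dots,y_{s+k})$; $f^{\bar a,\bar e}$ is the image under $x_i\mapsto a_i$, $y_i\mapsto e_i$, and $f_s^{\bar a,\bar e}:=(f_s)^{\bar a,\bar e}$. Write $[r]=\{1,\dots,r\}$, $S+1=\{s+1:s\in S\}$. For $0\le r\le k$, $\alpha(r,k):=\sum_{S}\prod_{i\in S}y_i\prod_{j\in[r]\setminus(S\cup(S+1))}x_j$ over subsets $S\subseteq\{1,\dots,r-1\}$ with no two consecutive integers; $\alpha(-1,k):=0$; for $r>k$, $\alpha(r,k):=x_r\alpha(r-1,k)+y_{r-1}\alpha(r-2,k)$; $\alpha_s(r,k):=(\alpha(r,k))_s$. *)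

theory Defs
  imports "Jordan_Normal_Form.Determinant"
begin

text \<open>Vectors in K^k are functions nat => 'a, meaningful on the indices 1..k.
  Periodic extension: index i (i >= 1) refers to component ((i - 1) mod k) + 1.\<close>
definition per :: "nat \<Rightarrow> (nat \<Rightarrow> 'a) \<Rightarrow> nat \<Rightarrow> 'a" where
  "per k v i = v ((i - 1) mod k + 1)"

text \<open>The tridiagonal matrix T^k_n(a,b,c) (1-indexed entries, periodic vectors):
  diagonal a_1..a_n, superdiagonal b_1..b_(n-1), subdiagonal c_1..c_(n-1).\<close>
definition tridiag :: "nat \<Rightarrow> nat \<Rightarrow> (nat \<Rightarrow> 'a::zero) \<Rightarrow> (nat \<Rightarrow> 'a) \<Rightarrow> (nat \<Rightarrow> 'a) \<Rightarrow> 'a mat" where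
  "tridiag k n a b c = mat n n (\<lambda>(i, j).
     if i = j then per k a (i + 1)
     else if j = i + 1 then per k b (i + 1)
     else if i = j + 1 then per k c (j + 1)
     else 0)"

text \<open>alpha(r,k) evaluated at x_j := x j, y_j := y j (x, y give the values of all
  periodically-indexed variables). Since evaluation is a ring homomorphism this is
  the image of the integer polynomial alpha(r,k).\<close>
function alpha :: "nat \<Rightarrow> (nat \<Rightarrow> 'a::comm_ring_1) \<Rightarrow> (nat \<Rightarrow> 'a) \<Rightarrow> nat \<Rightarrow> 'a" where
  "alpha k x y r =
     (if r \<le> k then
        (\<Sum>S\<in>{S. S \<subseteq> {1..<r} \<and> (\<forall>i\<in>S. i + 1 \<notin> S)}.
            (\<Prod>i\<in>S. y i) * (\<Prod>j\<in>{1..r} - (S \<union> (\<lambda>s. s + 1) ` S). x j))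
      else x r * alpha k x y (r - 1) + y (r - 1) * alpha k x y (r - 2))"
  by pat_completeness auto
termination by (relation "measure (\<lambda>(k, x, y, r). r)") auto

definition alpha_ev :: "nat \<Rightarrow> (nat \<Rightarrow> 'a::comm_ring_1) \<Rightarrow> (nat \<Rightarrow> 'a) \<Rightarrow> nat \<Rightarrow> nat \<Rightarrow> 'a" where
  "alpha_ev k a e s r = alpha k (\<lambda>j. per k a (s + j)) (\<lambda>j. per k e (s + j)) r"

end

theory Submission
  imports Defs
begin
declare alpha.simps[simp del]


definition tri :: "(nat \<Rightarrow> 'a::comm_ring_1) \<Rightarrow> (nat \<Rightarrow> 'a) \<Rightarrow> (nat \<Rightarrow> 'a) \<Rightarrow> nat \<Rightarrow> 'a mat" where
  "tri A B C L = mat L L (\<lambda>(i, j). if i = j then A i else if j = i + 1 then B i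
      else if i = j + 1 then C j else 0)"

lemma tri_rec:
  "det (tri A B C (Suc (Suc L))) = A (Suc L) * det (tri A B C (Suc L)) - B L * C L * det (tri A B C L)"
proof -
  let ?T = "tri A B C (Suc (Suc L))"
  have T: "?T \<in> carrier_mat (Suc (Suc L)) (Suc (Suc L))" by (simp add: tri_def)
  have "det ?T = (\<Sum>j<Suc (Suc L). ?T $$ (Suc L, j) * cofactor ?T (Suc L) j)"
    by (rule laplace_expansion_row[OF T]) simp
  also have "\<dots> = ?T $$ (Suc L, L) * cofactor ?T (Suc L) L + ?T $$ (Suc L, Suc L) * cofactor ?T (Suc L) (Suc L)"
  proof -
    have "(\<Sum>j<L. ?T $$ (Suc L, j) * cofactor ?T (Suc L) j) = 0"
      by (rule sum.neutral) (auto simp: tri_def)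
    then show ?thesis by (simp add: lessThan_Suc)
  qed
  also have "?T $$ (Suc L, Suc L) = A (Suc L)" by (simp add: tri_def)
  also have "?T $$ (Suc L, L) = C L" by (simp add: tri_def)
  also have "mat_delete ?T (Suc L) (Suc L) = tri A B C (Suc L)"
    by (rule eq_matI) (auto simp: tri_def mat_delete_def)
  hence "cofactor ?T (Suc L) (Suc L) = det (tri A B C (Suc L))"
    by (simp add: cofactor_def)
  also have "cofactor ?T (Suc L) L = - (B L * det (tri A B C L))"
  proof -
    let ?M = "mat_delete ?T (Suc L) L"
    have M: "?M \<in> carrier_mat (Suc L) (Suc L)" by (simp add: tri_def mat_delete_def)
    have "det ?M = (\<Sum>i<Suc L. ?M $$ (i, L) * cofactor ?M i L)"
      by (rule laplace_expansion_column[OF M]) simp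
    also have "\<dots> = ?M $$ (L, L) * cofactor ?M L L"
    proof -
      have "(\<Sum>i<L. ?M $$ (i, L) * cofactor ?M i L) = 0"
        by (rule sum.neutral) (auto simp: tri_def mat_delete_def)
      then show ?thesis by (simp add: lessThan_Suc)
    qed
    also have "?M $$ (L, L) = B L" by (simp add: tri_def mat_delete_def)
    also have "mat_delete ?M L L = tri A B C L"
      by (rule eq_matI) (auto simp: tri_def mat_delete_def)
    hence "cofactor ?M L L = det (tri A B C L)"
      by (simp add: cofactor_def)
    finally have "det ?M = B L * det (tri A B C L)" .
    moreover have "(-1::'a) ^ (Suc L + L) = -1"
      by (simp add: power_add flip: power_mult_distrib)
    ultimately show ?thesis by (simp add: cofactor_def)
  qed
  finally show ?thesis by (simp add: algebra_simps)
qed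



definition NC :: "nat \<Rightarrow> nat set set" where
  "NC r = {S. S \<subseteq> {1..<r} \<and> (\<forall>i\<in>S. i + 1 \<notin> S)}"

definition aterm :: "(nat \<Rightarrow> 'a::comm_ring_1) \<Rightarrow> (nat \<Rightarrow> 'a) \<Rightarrow> nat \<Rightarrow> nat set \<Rightarrow> 'a" where
  "aterm x y r S = (\<Prod>i\<in>S. y i) * (\<Prod>j\<in>{1..r} - (S \<union> (\<lambda>s. s + 1) ` S). x j)"

lemma alpha_le: "r \<le> k \<Longrightarrow> alpha k x y r = (\<Sum>S\<in>NC r. aterm x y r S)"
  by (subst alpha.simps) (simp add: NC_def aterm_def)

lemma NC_fin: "finite (NC r)"
  unfolding NC_def by (rule finite_subset[of _ "Pow {1..<r}"]) auto

lemma NC_split: "NC (Suc (Suc r)) = NC (Suc r) \<union> insert (Suc r) ` NC r"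
proof
  show "NC (Suc (Suc r)) \<subseteq> NC (Suc r) \<union> insert (Suc r) ` NC r"
  proof
    fix S assume S: "S \<in> NC (Suc (Suc r))"
    show "S \<in> NC (Suc r) \<union> insert (Suc r) ` NC r"
    proof (cases "Suc r \<in> S")
      case False
      then have "S \<in> NC (Suc r)" using S unfolding NC_def by (auto simp: less_Suc_eq)
      then show ?thesis by blast
    next
      case True
      then have "r \<notin> S" using S unfolding NC_def by auto
      then have "S - {Suc r} \<in> NC r" using S unfolding NC_def by (auto simp: less_Suc_eq)
      moreover have "S = insert (Suc r) (S - {Suc r})" using True by auto
      ultimately show ?thesis by blast
    qed
  qed
next
  show "NC (Suc r) \<union> insert (Suc r) ` NC r \<subseteq> NC (Suc (Suc r))"
    unfolding NC_def by auto
qed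

lemma alpha_rec_le:
  assumes "Suc (Suc r) \<le> k"
  shows "alpha k x y (Suc (Suc r)) = x (Suc (Suc r)) * alpha k x y (Suc r) + y (Suc r) * alpha k x y r"
proof -
  have disj: "NC (Suc r) \<inter> insert (Suc r) ` NC r = {}" unfolding NC_def by auto
  have inj: "inj_on (insert (Suc r)) (NC r)"
  proof (rule inj_onI)
    fix S T assume ST: "S \<in> NC r" "T \<in> NC r" "insert (Suc r) S = insert (Suc r) T"
    moreover have "Suc r \<notin> S" "Suc r \<notin> T" using ST unfolding NC_def by auto
    ultimately show "S = T" by (metis Diff_insert_absorb)
  qed
  have A: "(\<Sum>S\<in>NC (Suc r). aterm x y (Suc (Suc r)) S) = x (Suc (Suc r)) * (\<Sum>S\<in>NC (Suc r). aterm x y (Suc r) S)"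
    unfolding sum_distrib_left
  proof (rule sum.cong[OF refl])
    fix S assume S: "S \<in> NC (Suc r)"
    have fS: "finite S" using S unfolding NC_def by (auto intro: finite_subset)
    have eq: "{1..Suc (Suc r)} - (S \<union> (\<lambda>s. s + 1) ` S) = insert (Suc (Suc r)) ({1..Suc r} - (S \<union> (\<lambda>s. s + 1) ` S))"
      using S unfolding NC_def by auto
    have nin: "Suc (Suc r) \<notin> {1..Suc r} - (S \<union> (\<lambda>s. s + 1) ` S)" by auto
    show "aterm x y (Suc (Suc r)) S = x (Suc (Suc r)) * aterm x y (Suc r) S"
      unfolding aterm_def eq by (subst prod.insert[OF _ nin]) (auto simp: algebra_simps)
  qed
  have B: "(\<Sum>S\<in>insert (Suc r) ` NC r. aterm x y (Suc (Suc r)) S) = y (Suc r) * (\<Sum>S\<in>NC r. aterm x y r S)"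
    unfolding sum.reindex[OF inj] sum_distrib_left
  proof (rule sum.cong[OF refl])
    fix S assume S: "S \<in> NC r"
    have fS: "finite S" using S unfolding NC_def by (auto intro: finite_subset)
    have nin: "Suc r \<notin> S" using S unfolding NC_def by auto
    have eq: "{1..Suc (Suc r)} - (insert (Suc r) S \<union> (\<lambda>s. s + 1) ` insert (Suc r) S) = {1..r} - (S \<union> (\<lambda>s. s + 1) ` S)"
      using S unfolding NC_def by auto
    show "(aterm x y (Suc (Suc r)) \<circ> insert (Suc r)) S = y (Suc r) * aterm x y r S"
      unfolding aterm_def o_def eq using fS nin by (simp add: algebra_simps)
  qed
  have e1: "alpha k x y (Suc (Suc r)) = (\<Sum>S\<in>NC (Suc (Suc r)). aterm x y (Suc (Suc r)) S)"
    by (rule alpha_le[OF assms])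
  have e2: "alpha k x y (Suc r) = (\<Sum>S\<in>NC (Suc r). aterm x y (Suc r) S)"
    by (rule alpha_le) (use assms in simp)
  have e3: "alpha k x y r = (\<Sum>S\<in>NC r. aterm x y r S)"
    by (rule alpha_le) (use assms in simp)
  have "(\<Sum>S\<in>NC (Suc (Suc r)). aterm x y (Suc (Suc r)) S) =
     (\<Sum>S\<in>NC (Suc r). aterm x y (Suc (Suc r)) S) + (\<Sum>S\<in>insert (Suc r) ` NC r. aterm x y (Suc (Suc r)) S)"
    unfolding NC_split by (rule sum.union_disjoint) (use NC_fin disj in auto)
  then show ?thesis unfolding e1 e2 e3 A B .
qed

lemma alpha_rec:
  assumes "k \<ge> 1"
  shows "alpha k x y (Suc (Suc r)) = x (Suc (Suc r)) * alpha k x y (Suc r) + y (Suc r) * alpha k x y r"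
proof (cases "Suc (Suc r) \<le> k")
  case True then show ?thesis by (rule alpha_rec_le)
next
  case False
  then show ?thesis by (subst alpha.simps) simp
qed

lemma alpha_0: "alpha k x y 0 = 1"
proof -
  have "alpha k x y 0 = (\<Sum>S\<in>NC 0. aterm x y 0 S)" by (rule alpha_le) simp
  also have "NC 0 = {{}}" unfolding NC_def by auto
  finally show ?thesis by (simp add: aterm_def)
qed

lemma alpha_1: "k \<ge> 1 \<Longrightarrow> alpha k x y 1 = x 1"
proof -
  assume "k \<ge> 1"
  then have "alpha k x y 1 = (\<Sum>S\<in>NC 1. aterm x y 1 S)" by (rule alpha_le)
  also have "NC 1 = {{}}" unfolding NC_def by auto
  finally show ?thesis by (simp add: aterm_def)
qed



definition Dg :: "(nat \<Rightarrow> 'a::comm_ring_1) \<Rightarrow> (nat \<Rightarrow> 'a) \<Rightarrow> (nat \<Rightarrow> 'a) \<Rightarrow> nat \<Rightarrow> nat \<Rightarrow> 'a" where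
  "Dg A B C s L = det (tri (\<lambda>i. A (s + i)) (\<lambda>i. B (s + i)) (\<lambda>i. C (s + i)) L)"

lemma Dg_0: "Dg A B C s 0 = 1"
  unfolding Dg_def by (rule det_dim_zero) (simp add: tri_def)

lemma Dg_1: "Dg A B C s (Suc 0) = A s"
  unfolding Dg_def by (subst det_single) (auto simp: tri_def)

lemma Dg_rec: "Dg A B C s (Suc (Suc L)) = A (s + Suc L) * Dg A B C s (Suc L) - B (s + L) * C (s + L) * Dg A B C s L"
  unfolding Dg_def by (rule tri_rec)

lemma Dg_split0:
  assumes z: "B (s + L1) * C (s + L1) = 0"
  shows "Dg A B C s (Suc L1 + t) = Dg A B C s (Suc L1) * Dg A B C (s + Suc L1) t"
proof -
  let ?D = "Dg A B C"
  have "?D s (Suc L1 + t) = ?D s (Suc L1) * ?D (s + Suc L1) t \<and>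
        ?D s (Suc L1 + Suc t) = ?D s (Suc L1) * ?D (s + Suc L1) (Suc t)"
  proof (induction t)
    case 0
    have "?D s (Suc L1 + Suc 0) = ?D s (Suc (Suc L1))" by simp
    also have "\<dots> = A (s + Suc L1) * ?D s (Suc L1)" using z by (simp add: Dg_rec)
    finally show ?case by (simp add: Dg_0 Dg_1 algebra_simps)
  next
    case (Suc t)
    have "?D s (Suc L1 + Suc (Suc t)) = ?D s (Suc (Suc (Suc L1 + t)))" by simp
    also have "\<dots> = A (s + Suc (Suc L1 + t)) * ?D s (Suc L1 + Suc t)
        - B (s + (Suc L1 + t)) * C (s + (Suc L1 + t)) * ?D s (Suc L1 + t)"
      by (subst Dg_rec) simp
    also have "\<dots> = ?D s (Suc L1) * (A (s + Suc L1 + Suc t) * ?D (s + Suc L1) (Suc t)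
        - B (s + Suc L1 + t) * C (s + Suc L1 + t) * ?D (s + Suc L1) t)"
      using Suc.IH by (simp add: algebra_simps)
    also have "\<dots> = ?D s (Suc L1) * ?D (s + Suc L1) (Suc (Suc t))"
      by (simp add: Dg_rec)
    finally show ?case using Suc.IH by simp
  qed
  then show ?thesis by simp
qed

lemma per_add_k: "1 \<le> j \<Longrightarrow> per k v (j + k) = per k v j"
proof -
  assume "1 \<le> j"
  then have "j + k - 1 = (j - 1) + k" by simp
  then show ?thesis unfolding per_def by simp
qed

lemma per_in: "1 \<le> j \<Longrightarrow> j \<le> k \<Longrightarrow> per k v j = v j"
  unfolding per_def by simp

lemma per_neg: "per k (\<lambda>j. - (b j * c j)) i = - (per k b i * per k c i)"
  unfolding per_def by simp

lemma Dg_per_split: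
  assumes "per k b (s + L1) * per k c (s + L1) = 0"
  shows "Dg (\<lambda>i. per k a (Suc i)) (\<lambda>i. per k b (Suc i)) (\<lambda>i. per k c (Suc i)) s (L1 + t) =
         Dg (\<lambda>i. per k a (Suc i)) (\<lambda>i. per k b (Suc i)) (\<lambda>i. per k c (Suc i)) s L1 *
         Dg (\<lambda>i. per k a (Suc i)) (\<lambda>i. per k b (Suc i)) (\<lambda>i. per k c (Suc i)) (s + L1) t"
proof (cases L1)
  case 0 then show ?thesis by (simp add: Dg_0)
next
  case (Suc L)
  then show ?thesis using Dg_split0[of "\<lambda>i. per k b (Suc i)" s L "\<lambda>i. per k c (Suc i)"] assms by simp
qed

lemma Dg_per_period:
  "Dg (\<lambda>i. per k a (Suc i)) (\<lambda>i. per k b (Suc i)) (\<lambda>i. per k c (Suc i)) (s + k) L =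
   Dg (\<lambda>i. per k a (Suc i)) (\<lambda>i. per k b (Suc i)) (\<lambda>i. per k c (Suc i)) s L"
proof -
  have h: "\<And>v i. per k v (Suc (s + k + i)) = per k v (Suc (s + i))"
    using per_add_k[of "Suc (s + _)" k] by (simp add: add_ac)
  show ?thesis unfolding Dg_def h ..
qed

lemma Dg_alpha:
  assumes k: "k \<ge> 1"
  shows "Dg (\<lambda>i. per k a (Suc i)) (\<lambda>i. per k b (Suc i)) (\<lambda>i. per k c (Suc i)) s L =
         alpha_ev k a (\<lambda>j. - (b j * c j)) s L"
proof -
  let ?D = "Dg (\<lambda>i. per k a (Suc i)) (\<lambda>i. per k b (Suc i)) (\<lambda>i. per k c (Suc i)) s"
  let ?E = "alpha_ev k a (\<lambda>j. - (b j * c j)) s"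
  have "?D L = ?E L \<and> ?D (Suc L) = ?E (Suc L)"
  proof (induction L)
    case 0
    have "?E 0 = 1" unfolding alpha_ev_def by (rule alpha_0)
    moreover have "?E (Suc 0) = per k a (Suc s)" unfolding alpha_ev_def
      by (simp add: alpha_1[OF k, unfolded One_nat_def])
    ultimately show ?case by (simp add: Dg_0 Dg_1)
  next
    case (Suc L)
    have "?D (Suc (Suc L)) = ?E (Suc (Suc L))"
      using Suc.IH k
      by (simp add: Dg_rec alpha_ev_def alpha_rec[OF k] per_neg algebra_simps)
    then show ?case using Suc.IH by simp
  qed
  then show ?thesis by simp
qed



theorem corollary5p6:
  fixes a b c :: "nat \<Rightarrow> 'a::comm_ring_1"
    and k n m r q p r' :: nat
    and i :: "nat \<Rightarrow> nat"
    and mj :: "nat \<Rightarrow> int"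
  assumes "k \<ge> 1" and "n \<ge> 1"
    and "m = n div k" and "r = n mod k"
    and "q \<ge> 1"
    and "1 \<le> i 1" and "\<forall>j. 1 \<le> j \<and> j < q \<longrightarrow> i j < i (j + 1)" and "i q \<le> k"
    and "n > i 1"
    and "(\<forall>j\<in>{1..q}. b (i j) = 0) \<or> (\<forall>j\<in>{1..q}. c (i j) = 0)"
    and "i (q + 1) = i 1 + k" and "i 0 = i q"
    and "(r \<le> i 1 \<and> r' = r + k \<and> p = 0) \<or>
         (\<not> r \<le> i 1 \<and> r' = r \<and> 1 \<le> p \<and> p \<le> q \<and> i p < r \<and> r \<le> i (p + 1))"
    and "\<forall>j. 1 \<le> j \<and> j < q \<longrightarrow> mj j = (if j < p then 1 else 0)"
    and "mj q = (if p > 0 \<or> m = 0 then 0 else -1)"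
  shows "det (tridiag k n a b c) =
     alpha_ev k a (\<lambda>j. - (b j * c j)) 0 (i 1)
     * (\<Prod>j = 1..q. alpha_ev k a (\<lambda>j. - (b j * c j)) (i j) (i (j + 1) - i j)
                     ^ nat (int m + mj j))
     * alpha_ev k a (\<lambda>j. - (b j * c j)) (i p) (r' - i p)"
proof -
  note k = assms(1)
  define D where "D = Dg (\<lambda>i. per k a (Suc i)) (\<lambda>i. per k b (Suc i)) (\<lambda>i. per k c (Suc i))"
  have link: "\<And>s L. alpha_ev k a (\<lambda>j. - (b j * c j)) s L = D s L"
    unfolding D_def by (rule Dg_alpha[OF k, symmetric])
  have dettri: "det (tridiag k n a b c) = D 0 n"
    unfolding D_def Dg_def tridiag_def tri_def by (rule arg_cong[where f=det], rule eq_matI) auto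
  have split: "\<And>s L1 t. per k b (s + L1) * per k c (s + L1) = 0 \<Longrightarrow> D s (L1 + t) = D s L1 * D (s + L1) t"
    unfolding D_def by (rule Dg_per_split)
  have period: "\<And>s L. D (s + k) L = D s L"
    unfolding D_def by (rule Dg_per_period)
  have mono: "\<And>j l. 1 \<le> j \<Longrightarrow> j \<le> l \<Longrightarrow> l \<le> q \<Longrightarrow> i j \<le> i l"
  proof -
    fix j l
    show "1 \<le> j \<Longrightarrow> j \<le> l \<Longrightarrow> l \<le> q \<Longrightarrow> i j \<le> i l"
    proof (induction l)
      case 0 then show ?case by simp
    next
      case (Suc l)
      show ?case
      proof (cases "j = Suc l")
        case True then show ?thesis by simp
      next
        case False
        then have "j \<le> l" "1 \<le> l" "l < q" using Suc.prems by auto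
        then have "i l < i (l + 1)" using assms(7) by auto
        then show ?thesis using Suc.IH \<open>j \<le> l\<close> \<open>l < q\<close> Suc.prems by simp
      qed
    qed
  qed
  have ik: "\<And>j. 1 \<le> j \<Longrightarrow> j \<le> q \<Longrightarrow> 1 \<le> i j \<and> i j \<le> k"
    using mono[of 1] mono[of _ q] assms(6,8) by (meson le_trans order_refl)
  have mono1: "\<And>j. 1 \<le> j \<Longrightarrow> j \<le> q \<Longrightarrow> i j \<le> i (Suc j)"
  proof -
    fix j assume j: "1 \<le> j" "j \<le> q"
    show "i j \<le> i (Suc j)"
    proof (cases "j < q")
      case True then show ?thesis using assms(7) j by fastforce
    next
      case False then have "j = q" using j by simp
      then show ?thesis using assms(8,11) by simp
    qed
  qed
  have zero: "\<And>j. 1 \<le> j \<Longrightarrow> j \<le> Suc q \<Longrightarrow> per k b (i j) * per k c (i j) = 0"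
  proof -
    fix j assume j: "1 \<le> j" "j \<le> Suc q"
    have z1: "b (i l) * c (i l) = 0" if "1 \<le> l" "l \<le> q" for l
      using assms(10) that by auto
    show "per k b (i j) * per k c (i j) = 0"
    proof (cases "j \<le> q")
      case True
      then show ?thesis using z1[OF j(1) True] ik[OF j(1) True] by (simp add: per_in)
    next
      case False then have "j = Suc q" using j by simp
      then have "i j = i 1 + k" using assms(11) by simp
      then show ?thesis using z1[of 1] assms(5,6) ik[of 1] assms(5)
        by (simp add: per_add_k per_in)
    qed
  qed
  define F where "F l = D (i l) (i (Suc l) - i l)" for l
  have chain: "\<And>j L. 1 \<le> j \<Longrightarrow> j \<le> Suc q \<Longrightarrow> D (i 1) (i j - i 1 + L) = (\<Prod>l\<in>{1..<j}. F l) * D (i j) L"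
  proof -
    fix j L
    assume j: "1 \<le> j" "j \<le> Suc q"
    show "D (i 1) (i j - i 1 + L) = (\<Prod>l\<in>{1..<j}. F l) * D (i j) L"
      using j
    proof (induction j arbitrary: L rule: nat_induct_at_least)
      case base then show ?case by simp
    next
      case (Suc j)
      have jq: "j \<le> q" using Suc.prems by simp
      have m1: "i j \<le> i (Suc j)" using mono1[OF Suc.hyps(1) jq] .
      have m2: "i 1 \<le> i j" using mono[OF _ Suc.hyps(1) jq] by simp
      have "i (Suc j) - i 1 + L = i j - i 1 + ((i (Suc j) - i j) + L)" using m1 m2 by arith
      then have "D (i 1) (i (Suc j) - i 1 + L) = (\<Prod>l\<in>{1..<j}. F l) * D (i j) ((i (Suc j) - i j) + L)"
        using Suc.IH[of "(i (Suc j) - i j) + L"] jq by (simp only:)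
      also have "D (i j) ((i (Suc j) - i j) + L) = D (i j) (i (Suc j) - i j) * D (i j + (i (Suc j) - i j)) L"
        by (rule split) (use zero[of "Suc j"] m1 Suc.prems in simp)
      also have "i j + (i (Suc j) - i j) = i (Suc j)" using m1 by simp
      finally show ?case using Suc.hyps(1)
        by (simp add: F_def prod.atLeastLessThan_Suc mult_ac)
    qed
  qed
  define G where "G = (\<Prod>l\<in>{1..q}. F l)"
  have periodG: "\<And>t L. D (i 1) (t * k + L) = G ^ t * D (i 1) L"
  proof -
    have step: "D (i 1) (k + L) = G * D (i 1) L" for L
    proof -
      have "D (i 1) (i (Suc q) - i 1 + L) = (\<Prod>l\<in>{1..<Suc q}. F l) * D (i (Suc q)) L"
        by (rule chain) simp_all
      then show ?thesis using assms(11) period[of "i 1" L]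
        by (simp add: G_def atLeastLessThanSuc_atLeastAtMost)
    qed
    fix t L
    show "D (i 1) (t * k + L) = G ^ t * D (i 1) L"
    proof (induction t)
      case 0 then show ?case by simp
    next
      case (Suc t)
      have "Suc t * k + L = k + (t * k + L)" by simp
      then show ?case using step[of "t * k + L"] Suc.IH by (simp only: power_Suc mult.assoc)
    qed
  qed
  have i1k: "i 1 \<le> k" using ik[of 1] assms(5) by simp
  have first: "D 0 n = D 0 (i 1) * D (i 1) (n - i 1)"
  proof -
    have "D 0 (i 1 + (n - i 1)) = D 0 (i 1) * D (0 + i 1) (n - i 1)"
      by (rule split) (use zero[of 1] in simp)
    then show ?thesis using assms(9) by simp
  qed
  have nmk: "n = m * k + r" using assms(3,4) by simp
  show ?thesis
    unfolding link dettri first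
  proof -
    from assms(13) show "D 0 (i 1) * D (i 1) (n - i 1) =
      D 0 (i 1) * (\<Prod>j = 1..q. D (i j) (i (j + 1) - i j) ^ nat (int m + mj j)) * D (i p) (r' - i p)"
    proof
      assume c: "r \<le> i 1 \<and> r' = r + k \<and> p = 0"
      have "m \<noteq> 0"
      proof
        assume "m = 0" then show False using c assms(9) nmk by simp
      qed
      then obtain m0 where m0: "m = Suc m0" by (cases m) auto
      have iqk: "i 1 \<le> i q" "i q \<le> k" using mono[of 1 q] assms(5,8) by auto
      have "n - i 1 = m0 * k + (i q - i 1 + (r + k - i q))" using nmk m0 iqk c by simp
      then have "D (i 1) (n - i 1) = G ^ m0 * ((\<Prod>l\<in>{1..<q}. F l) * D (i q) (r + k - i q))"
        using periodG chain[of q] assms(5) by simp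
      moreover have "(\<Prod>j = 1..q. D (i j) (i (j + 1) - i j) ^ nat (int m + mj j)) =
          (\<Prod>l\<in>{1..<q}. F l ^ m) * F q ^ m0"
      proof -
        have "(\<Prod>j = 1..q. D (i j) (i (j + 1) - i j) ^ nat (int m + mj j)) =
              (\<Prod>j \<in> {1..<q}. F j ^ nat (int m + mj j)) * F q ^ nat (int m + mj q)"
          using assms(5) by (simp add: F_def flip: atLeastLessThanSuc_atLeastAtMost add: prod.atLeastLessThan_Suc)
        also have "(\<Prod>j \<in> {1..<q}. F j ^ nat (int m + mj j)) = (\<Prod>l\<in>{1..<q}. F l ^ m)"
          using assms(14) c by (intro prod.cong) auto
        also have "nat (int m + mj q) = m0" using assms(15) c m0 by simp
        finally show ?thesis .
      qed
      moreover have "G = (\<Prod>l\<in>{1..<q}. F l) * F q" using assms(5)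
        by (simp add: G_def flip: atLeastLessThanSuc_atLeastAtMost add: prod.atLeastLessThan_Suc)
      ultimately show ?thesis using c assms(12) m0
        by (simp add: power_mult_distrib prod_power_distrib prod.distrib mult_ac)
    next
      assume c: "\<not> r \<le> i 1 \<and> r' = r \<and> 1 \<le> p \<and> p \<le> q \<and> i p < r \<and> r \<le> i (p + 1)"
      have ip: "i 1 \<le> i p" using mono[of 1 p] c by simp
      have e: "n - i 1 = m * k + (i p - i 1 + (r - i p))" using nmk c ip by simp
      have "D (i 1) (n - i 1) = G ^ m * D (i 1) (i p - i 1 + (r - i p))"
        unfolding e by (rule periodG)
      also have "D (i 1) (i p - i 1 + (r - i p)) = (\<Prod>l\<in>{1..<p}. F l) * D (i p) (r - i p)"
        by (rule chain) (use c in auto)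
      finally have "D (i 1) (n - i 1) = G ^ m * ((\<Prod>l\<in>{1..<p}. F l) * D (i p) (r - i p))" .
      moreover have "(\<Prod>j = 1..q. D (i j) (i (j + 1) - i j) ^ nat (int m + mj j)) =
          G ^ m * (\<Prod>l\<in>{1..<p}. F l)"
      proof -
        have "(\<Prod>j = 1..q. D (i j) (i (j + 1) - i j) ^ nat (int m + mj j)) =
              (\<Prod>j = 1..q. F j ^ m * (if j < p then F j else 1))"
        proof (rule prod.cong[OF refl])
          fix j assume j: "j \<in> {1..q}"
          have "nat (int m + mj j) = m + (if j < p then 1 else 0)"
          proof (cases "j < q")
            case True then show ?thesis using assms(14) j by auto
          next
            case False then have "j = q" using j by auto
            then show ?thesis using assms(15) c by auto
          qed
          then show "D (i j) (i (j + 1) - i j) ^ nat (int m + mj j) = F j ^ m * (if j < p then F j else 1)"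
            by (simp add: F_def power_add)
        qed
        also have "\<dots> = G ^ m * (\<Prod>j = 1..q. (if j < p then F j else 1))"
          by (simp add: G_def prod.distrib prod_power_distrib)
        also have "(\<Prod>j = 1..q. (if j < p then F j else 1)) = (\<Prod>j \<in> {j \<in> {1..q}. j < p}. F j)"
          by (rule prod.inter_filter[symmetric]) simp
        also have "{j \<in> {1..q}. j < p} = {1..<p}" using c by auto
        finally show ?thesis .
      qed
      ultimately show ?thesis using c by (simp add: mult_ac)
    qed
  qed
qed


end
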